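(* Let $\widehat Z\in\mathbb C^{dn_1\times dn_2}$ be a fixed block diagonal matrix and let $\Omega$ follow the Bernoulli model with parameter $p\in(0,1]$. Then with high probability $$\Big\|\Big(\tfrac1p\widehat{\mathcal G}\mathcal P_\Omega\widehat{\mathcal G}^*-\widehat{\mathcal G}\widehat{\mathcal G}^*\Big)\widehat Z\Big\|\le C\Big(\sqrt{\tfrac{\log(dn)}{p}}\,\|\widehat Z\|_{\widehat{\mathcal G},F}+\tfrac{\log(dn)}{p}\,\|\widehat Z\|_{\widehat{\mathcal G},\infty}\Big),$$ where $\|\cdot\|$ is the spectral norm and $C>0$ is an absolute constant.
   Context: Let $d,n\ge1$ with $n$ odd and $n_1=n_2=(n+1)/2$. For $a\in[n]$, $w_a=\#\{(j,k)\in[n_1]\times[n_2]:j+k=a+1\}$, $G_a=w_a^{-1/2}\sum_{j+k=a+1}e_je_k^{\mathsf T}$, $\mathcal G(x)=\sum_ax_aG_a$. $F$ is the $d\times d$ unitary DFT matrix. $\widehat{\mathcal G}$ maps $X\in\mathbb C^{d\times n}$ to the block diagonal matrix ($d$ blocks of size $n_1\times n_2$) whose $i$-th block is $\mathcal G$ of the $i$-th row of $FX$; $\widehat{\mathcal G}^*$ is its adjoint w.r.t. $\langle A,B\rangle=\mathrm{tr}(AB^{\mathsf H})$. $\widehat G_{j,k}=\widehat{\mathcal G}(e_je_k^{\mathsf T})=\mathrm{diag}(F_{1j}G_k,\dots,F_{dj}G_k)$. $\|\widehat Z\|_{\widehat{\mathcal G},F}=\big(\sum_{(j,k)\in[d]\times[n]}\frac1{dw_k}|\langle\widehat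 Z,\widehat G_{j,k}\rangle|^2\big)^{1/2}$ and $\|\widehat Z\|_{\widehat{\mathcal G},\infty}=\max_{(j,k)}\frac1{\sqrt{dw_k}}|\langle\widehat Z,\widehat G_{j,k}\rangle|$. $\mathcal P_\Omega$ keeps entries in $\Omega$ and zeroes the rest; Bernoulli model: each index in $\Omega$ independently with probability $p$. "With high probability": probability at least $1-c_1(dn)^{-c_2}$ for absolute constants $c_1,c_2>0$. *)

theory Defs
  imports "HOL-Probability.Probability"
begin

text \<open>All indices are 0-based: rows/columns of a d x n matrix are l < d, a < n;
  n1 = n2 = (n+1)/2; the Hankel index condition j+k=a+1 (1-based) becomes j+k=a (0-based).
  Matrices are functions nat => nat => complex, with explicit dimensions.\<close>

definition hn :: "nat \<Rightarrow> nat" where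
  "hn n = (n + 1) div 2"

definition wt :: "nat \<Rightarrow> nat \<Rightarrow> nat" where
  "wt n a = card {(j, k). j < hn n \<and> k < hn n \<and> j + k = a}"

definition Gmat :: "nat \<Rightarrow> nat \<Rightarrow> nat \<Rightarrow> nat \<Rightarrow> complex" where
  "Gmat n a j k = (if j + k = a then complex_of_real (1 / sqrt (real (wt n a))) else 0)"

definition hankel :: "nat \<Rightarrow> (nat \<Rightarrow> complex) \<Rightarrow> nat \<Rightarrow> nat \<Rightarrow> complex" where
  "hankel n x j k = (\<Sum>a<n. x a * Gmat n a j k)"

definition dft :: "nat \<Rightarrow> nat \<Rightarrow> nat \<Rightarrow> complex" where
  "dft d i l = cis (- 2 * pi * real (i * l) / real d) / complex_of_real (sqrt (real d))"

text \<open>The operator Ghat: d x n matrix to block-diagonal (d n1) x (d n2) matrix.\<close>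
definition Ghat :: "nat \<Rightarrow> nat \<Rightarrow> (nat \<Rightarrow> nat \<Rightarrow> complex) \<Rightarrow> nat \<Rightarrow> nat \<Rightarrow> complex" where
  "Ghat d n X r c =
     (if r div hn n = c div hn n
      then hankel n (\<lambda>a. \<Sum>l<d. dft d (r div hn n) l * X l a) (r mod hn n) (c mod hn n)
      else 0)"

text \<open>Its adjoint w.r.t. the trace inner product (explicit formula).\<close>
definition Ghat_adj :: "nat \<Rightarrow> nat \<Rightarrow> (nat \<Rightarrow> nat \<Rightarrow> complex) \<Rightarrow> nat \<Rightarrow> nat \<Rightarrow> complex" where
  "Ghat_adj d n Y l a =
     (\<Sum>i<d. cnj (dft d i l) *
        (\<Sum>j<hn n. \<Sum>k<hn n. Gmat n a j k * Y (i * hn n + j) (i * hn n + k)))"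

definition mat_inner :: "nat \<Rightarrow> nat \<Rightarrow> (nat \<Rightarrow> nat \<Rightarrow> complex) \<Rightarrow> (nat \<Rightarrow> nat \<Rightarrow> complex) \<Rightarrow> complex" where
  "mat_inner m k A B = (\<Sum>r<m. \<Sum>c<k. A r c * cnj (B r c))"

definition Ghat_basis :: "nat \<Rightarrow> nat \<Rightarrow> nat \<Rightarrow> nat \<Rightarrow> nat \<Rightarrow> nat \<Rightarrow> complex" where
  "Ghat_basis d n j k = Ghat d n (\<lambda>l a. if l = j \<and> a = k then 1 else 0)"

definition coef :: "nat \<Rightarrow> nat \<Rightarrow> (nat \<Rightarrow> nat \<Rightarrow> complex) \<Rightarrow> nat \<Rightarrow> nat \<Rightarrow> real" where
  "coef d n Z j k = cmod (mat_inner (d * hn n) (d * hn n) Z (Ghat_basis d n j k))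
                     / sqrt (real d * real (wt n k))"

definition normGF :: "nat \<Rightarrow> nat \<Rightarrow> (nat \<Rightarrow> nat \<Rightarrow> complex) \<Rightarrow> real" where
  "normGF d n Z = sqrt (\<Sum>j<d. \<Sum>k<n. (coef d n Z j k)\<^sup>2)"

definition normGinf :: "nat \<Rightarrow> nat \<Rightarrow> (nat \<Rightarrow> nat \<Rightarrow> complex) \<Rightarrow> real" where
  "normGinf d n Z = Max {coef d n Z j k | j k. j < d \<and> k < n}"

definition vec_norm :: "nat \<Rightarrow> (nat \<Rightarrow> complex) \<Rightarrow> real" where
  "vec_norm k v = sqrt (\<Sum>c<k. (cmod (v c))\<^sup>2)"

definition spec_norm :: "nat \<Rightarrow> nat \<Rightarrow> (nat \<Rightarrow> nat \<Rightarrow> complex) \<Rightarrow> real" where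
  "spec_norm m k A = Sup {vec_norm m (\<lambda>r. \<Sum>c<k. A r c * v c) | v. vec_norm k v \<le> 1}"

definition block_diag :: "nat \<Rightarrow> nat \<Rightarrow> (nat \<Rightarrow> nat \<Rightarrow> complex) \<Rightarrow> bool" where
  "block_diag d n Z \<longleftrightarrow>
     (\<forall>r < d * hn n. \<forall>c < d * hn n. r div hn n \<noteq> c div hn n \<longrightarrow> Z r c = 0)"

text \<open>P_Omega, with Omega = {(l,a). S (l,a)} for an indicator S.\<close>
definition P_Omega :: "(nat \<times> nat \<Rightarrow> bool) \<Rightarrow> (nat \<Rightarrow> nat \<Rightarrow> complex) \<Rightarrow> nat \<Rightarrow> nat \<Rightarrow> complex" where
  "P_Omega S X l a = (if S (l, a) then X l a else 0)"

definition bernoulli_model :: "nat \<Rightarrow> nat \<Rightarrow> real \<Rightarrow> (nat \<times> nat \<Rightarrow> bool) pmf" where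
  "bernoulli_model d n p = Pi_pmf ({..<d} \<times> {..<n}) False (\<lambda>_. bernoulli_pmf p)"

definition deviation :: "nat \<Rightarrow> nat \<Rightarrow> real \<Rightarrow> (nat \<times> nat \<Rightarrow> bool) \<Rightarrow> (nat \<Rightarrow> nat \<Rightarrow> complex) \<Rightarrow> nat \<Rightarrow> nat \<Rightarrow> complex" where
  "deviation d n p S Z r c =
     complex_of_real (1 / p) * Ghat d n (P_Omega S (Ghat_adj d n Z)) r c - Ghat d n (Ghat_adj d n Z) r c"

end

theory Submission
  imports Defs
begin


lemma exp_quad_bound:
  fixes x :: real assumes "x \<le> 1" shows "exp x \<le> 1 + x + x\<^sup>2"
proof (cases "0 \<le> x")
  case True then show ?thesis using exp_bound assms by blast
next
  case False
  define y where "y = -x"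
  have y: "0 < y" using False y_def by simp
  have "1 + y \<le> exp y" by (rule exp_ge_add_one_self)
  hence "exp x \<le> 1 / (1 + y)" using y by (simp add: y_def exp_minus field_simps)
  also have "\<dots> \<le> 1 - y + y\<^sup>2"
  proof -
    have "1 \<le> (1 + y) * (1 - y + y\<^sup>2)" using y by (simp add: algebra_simps power2_eq_square power3_eq_cube)
    thus ?thesis using y by (simp add: field_simps)
  qed
  finally show ?thesis by (simp add: y_def)
qed

lemma mgf_one:
  fixes p B lam beta :: real
  assumes p: "0 < p" "p \<le> 1" and b: "\<bar>beta\<bar> \<le> B" and l: "0 \<le> lam" "lam * B \<le> p"
  shows "measure_pmf.expectation (bernoulli_pmf p) (\<lambda>v. exp (lam * ((if v then 1/p - 1 else -1) * beta)))
          \<le> exp (lam\<^sup>2 * beta\<^sup>2 / p)"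
proof -
  define x1 where "x1 = lam * ((1/p - 1) * beta)"
  define x2 where "x2 = lam * (-1 * beta)"
  have lb: "lam * \<bar>beta\<bar> \<le> p" using b l by (meson mult_left_mono order_trans)
  have x1: "x1 \<le> 1"
  proof -
    have "x1 \<le> \<bar>x1\<bar>" by simp
    also have "\<bar>x1\<bar> = (1/p - 1) * (lam * \<bar>beta\<bar>)" proof -
      have "1/p - 1 \<ge> 0" using p by (simp add: field_simps)
      thus ?thesis using l unfolding x1_def by (simp add: abs_mult)
    qed
    also have "\<dots> \<le> (1/p - 1) * p" using lb p by (intro mult_left_mono) (auto simp: field_simps)
    also have "\<dots> \<le> 1" using p by (simp add: field_simps)
    finally show ?thesis .
  qed
  have x2: "x2 \<le> 1"
  proof -
    have "x2 \<le> lam * \<bar>beta\<bar>" unfolding x2_def using l mult_left_mono[of "-beta" "\<bar>beta\<bar>" lam] by simp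
    thus ?thesis using lb p by simp
  qed
  have "measure_pmf.expectation (bernoulli_pmf p) (\<lambda>v. exp (lam * ((if v then 1/p - 1 else -1) * beta)))
        = exp x1 * p + exp x2 * (1 - p)" using p by (simp add: x1_def x2_def)
  also have "\<dots> \<le> (1 + x1 + x1\<^sup>2) * p + (1 + x2 + x2\<^sup>2) * (1 - p)"
    using p exp_quad_bound[OF x1] exp_quad_bound[OF x2]
    by (intro add_mono mult_right_mono) auto
  also have "\<dots> = 1 + lam\<^sup>2 * beta\<^sup>2 * (1 - p) / p"
    using p unfolding x1_def x2_def by (simp add: field_simps power2_eq_square)
  also have "\<dots> \<le> 1 + lam\<^sup>2 * beta\<^sup>2 / p"
    using p by (intro add_left_mono divide_right_mono) (auto simp: mult_left_le)
  also have "\<dots> \<le> exp (lam\<^sup>2 * beta\<^sup>2 / p)" by (rule exp_ge_add_one_self)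
  finally show ?thesis .
qed

lemma integrable_bern: "integrable (measure_pmf (bernoulli_pmf p)) (f :: bool \<Rightarrow> real)"
  by (rule integrable_measure_pmf_finite) (rule finite_subset[of _ UNIV], auto)

lemma tail_mgf:
  fixes I :: "'a set" and beta :: "'a \<Rightarrow> real"
  assumes I: "finite I" and p: "0 < p" "p \<le> 1" and b: "\<And>x. x \<in> I \<Longrightarrow> \<bar>beta x\<bar> \<le> B"
    and l: "0 < lam" "lam * B \<le> p"
  shows "measure_pmf.prob (Pi_pmf I False (\<lambda>_. bernoulli_pmf p))
           {S. t < (\<Sum>x\<in>I. (if S x then 1/p - 1 else -1) * beta x)}
         \<le> exp (- lam * t + lam\<^sup>2 * (\<Sum>x\<in>I. (beta x)\<^sup>2) / p)"
proof -
  define M where "M = Pi_pmf I False (\<lambda>_. bernoulli_pmf p)"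
  define f where "f = (\<lambda>x v. exp (lam * ((if v then 1/p - 1 else -1) * beta x)))"
  define u where "u = (\<lambda>S. \<Prod>x\<in>I. f x (S x))"
  have u_eq: "u S = exp (lam * (\<Sum>x\<in>I. (if S x then 1/p - 1 else -1) * beta x))" for S
    unfolding u_def f_def using I by (simp add: sum_distrib_left exp_sum)
  have int: "integrable (measure_pmf M) u"
    unfolding M_def u_def by (rule integrable_prod_Pi_pmf[OF I]) (rule integrable_bern)
  have sub: "{S. t < (\<Sum>x\<in>I. (if S x then 1/p - 1 else -1) * beta x)}
             \<subseteq> {S \<in> space (measure_pmf M). exp (lam * t) \<le> u S}"
    using l by (auto simp: u_eq)
  have "measure_pmf.prob M {S. t < (\<Sum>x\<in>I. (if S x then 1/p - 1 else -1) * beta x)}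
        \<le> measure_pmf.prob M {S \<in> space (measure_pmf M). exp (lam * t) \<le> u S}"
    by (rule measure_pmf.finite_measure_mono[OF sub]) simp
  also have "\<dots> \<le> measure_pmf.expectation M u / exp (lam * t)"
    by (rule integral_Markov_inequality_measure[OF int, of UNIV]) (auto simp: u_def f_def intro!: prod_nonneg)
  also have "measure_pmf.expectation M u = (\<Prod>x\<in>I. measure_pmf.expectation (bernoulli_pmf p) (f x))"
    unfolding M_def u_def by (rule expectation_prod_Pi_pmf[OF I]) (auto simp: f_def intro: integrable_bern)
  also have "\<dots> \<le> (\<Prod>x\<in>I. exp (lam\<^sup>2 * (beta x)\<^sup>2 / p))"
  proof (rule prod_mono, safe)
    fix x assume "x \<in> I"
    show "0 \<le> measure_pmf.expectation (bernoulli_pmf p) (f x)"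
      by (rule integral_nonneg_AE) (auto simp: f_def)
    show "measure_pmf.expectation (bernoulli_pmf p) (f x) \<le> exp (lam\<^sup>2 * (beta x)\<^sup>2 / p)"
      unfolding f_def by (rule mgf_one[OF p b[OF \<open>x \<in> I\<close>]]) (use l in auto)
  qed
  also have "\<dots> = exp (lam\<^sup>2 * (\<Sum>x\<in>I. (beta x)\<^sup>2) / p)"
    using I by (simp add: exp_sum sum_distrib_left sum_divide_distrib)
  finally have "measure_pmf.prob M {S. t < (\<Sum>x\<in>I. (if S x then 1/p - 1 else -1) * beta x)}
      \<le> exp (lam\<^sup>2 * (\<Sum>x\<in>I. (beta x)\<^sup>2) / p) / exp (lam * t)"
    by (simp add: divide_right_mono)
  also have "\<dots> = exp (- lam * t + lam\<^sup>2 * (\<Sum>x\<in>I. (beta x)\<^sup>2) / p)"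
    by (simp add: exp_diff[symmetric])
  finally show ?thesis unfolding M_def .
qed

lemma tail_bern:
  fixes I :: "'a set" and beta :: "'a \<Rightarrow> real"
  assumes I: "finite I" and p: "0 < p" "p \<le> 1" and b: "\<And>x. x \<in> I \<Longrightarrow> \<bar>beta x\<bar> \<le> B"
    and B: "0 \<le> B" and L: "0 < L"
    and t1: "2 * sqrt (L * (\<Sum>x\<in>I. (beta x)\<^sup>2) / p) \<le> t" and t2: "2 * L * B / p \<le> t"
  shows "measure_pmf.prob (Pi_pmf I False (\<lambda>_. bernoulli_pmf p))
           {S. t < (\<Sum>x\<in>I. (if S x then 1/p - 1 else -1) * beta x)} \<le> exp (- L)"
proof -
  define V where "V = (\<Sum>x\<in>I. (beta x)\<^sup>2)"
  have V0: "0 \<le> V" unfolding V_def by (simp add: sum_nonneg)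
  show ?thesis
  proof (cases "B = 0")
    case True
    hence "\<And>x. x \<in> I \<Longrightarrow> beta x = 0" using b by fastforce
    hence "{S. t < (\<Sum>x\<in>I. (if S x then 1/p - 1 else -1) * beta x)} = {}"
      using t2 True by auto
    thus ?thesis by simp
  next
    case False
    hence Bp: "0 < B" using B by simp
    have tpos: "0 < t" using t2 L Bp p by (smt (verit) divide_pos_pos mult_pos_pos)
    have tsq: "4 * L * V / p \<le> t\<^sup>2"
    proof -
      have "(2 * sqrt (L * V / p))\<^sup>2 \<le> t\<^sup>2"
        using t1 L V0 p unfolding V_def[symmetric] by (intro power_mono) auto
      moreover have "0 \<le> L * V / p" using L V0 p by simp
      ultimately show ?thesis by (simp add: power_mult_distrib)
    qed
    show ?thesis
    proof (cases "2 * V \<le> t * B")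
      case True
      have "measure_pmf.prob (Pi_pmf I False (\<lambda>_. bernoulli_pmf p))
           {S. t < (\<Sum>x\<in>I. (if S x then 1/p - 1 else -1) * beta x)}
          \<le> exp (- (p/B) * t + (p/B)\<^sup>2 * V / p)"
        unfolding V_def by (rule tail_mgf[OF I p b]) (use p Bp in auto)
      also have "\<dots> \<le> exp (- L)"
      proof -
        have "(p/B)\<^sup>2 * V / p = p * V / B\<^sup>2" using p by (simp add: power2_eq_square field_simps)
        also have "\<dots> \<le> p * (t * B / 2) / B\<^sup>2" using True p Bp
          by (intro divide_right_mono mult_left_mono) auto
        also have "\<dots> = p * t / (2 * B)" using Bp by (simp add: power2_eq_square field_simps)
        finally have e1: "(p/B)\<^sup>2 * V / p \<le> p * t / (2 * B)" .
        have "L \<le> p * t / (2 * B)" using t2 p Bp by (simp add: field_simps)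
        hence "- (p/B) * t + (p/B)\<^sup>2 * V / p \<le> - L" using e1 by (simp add: field_simps)
        thus ?thesis by simp
      qed
      finally show ?thesis .
    next
      case False
      hence Vp: "0 < V" using tpos Bp V0 by (smt (verit) mult_pos_pos)
      define lam where "lam = t * p / (2 * V)"
      have lam0: "0 < lam" unfolding lam_def using tpos p Vp by simp
      have lamB: "lam * B \<le> p"
      proof -
        have "lam * B = p * (t * B) / (2 * V)" unfolding lam_def by (simp add: field_simps)
        also have "\<dots> \<le> p * (2 * V) / (2 * V)" using False p Vp
          by (intro divide_right_mono mult_left_mono) auto
        finally show ?thesis using Vp by simp
      qed
      have "measure_pmf.prob (Pi_pmf I False (\<lambda>_. bernoulli_pmf p))
           {S. t < (\<Sum>x\<in>I. (if S x then 1/p - 1 else -1) * beta x)}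
          \<le> exp (- lam * t + lam\<^sup>2 * V / p)"
        unfolding V_def by (rule tail_mgf[OF I p b lam0 lamB])
      also have "- lam * t + lam\<^sup>2 * V / p = - (t\<^sup>2 * p / (4 * V))"
        unfolding lam_def using Vp p by (simp add: power2_eq_square field_simps)
      also have "exp (- (t\<^sup>2 * p / (4 * V))) \<le> exp (- L)"
      proof -
        have "L \<le> t\<^sup>2 * p / (4 * V)" using tsq Vp p by (simp add: field_simps)
        thus ?thesis by simp
      qed
      finally show ?thesis .
    qed
  qed
qed



definition E :: "nat \<Rightarrow> nat \<Rightarrow> nat \<Rightarrow> complex" where
  "E n t s = cis (2 * pi * real (t * s) / real n)"

lemma cmod_E [simp]: "cmod (E n t s) = 1" by (simp add: E_def)

lemma E_sym: "E n t s = E n s t" by (simp add: E_def mult.commute)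

lemma E_add: "E n t (j + k) = E n t j * E n t k"
  by (simp add: E_def cis_mult add_divide_distrib distrib_left algebra_simps)

lemma geo_cis:
  fixes k :: int assumes n: "0 < n" and k: "k \<noteq> 0" "\<bar>k\<bar> < int n"
  shows "(\<Sum>j<n. cis (2 * pi * real_of_int k / real n) ^ j) = 0"
proof -
  define z where "z = cis (2 * pi * real_of_int k / real n)"
  have zn: "z ^ n = 1"
  proof -
    have "real n * (2 * pi * real_of_int k / real n) = 2 * pi * real_of_int k" using n by simp
    hence "z ^ n = cis (2 * pi * real_of_int k)" unfolding z_def Complex.DeMoivre by simp
    also have "\<dots> = 1" by (rule cis_multiple_2pi) simp
    finally show ?thesis .
  qed
  have z1: "z \<noteq> 1"
  proof
    assume "z = 1"
    hence "cos (2 * pi * real_of_int k / real n) = 1" unfolding z_def by (metis cis.sel(1) one_complex.sel(1))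
    then obtain N :: int where N: "2 * pi * real_of_int k / real n = real_of_int N * 2 * pi"
      using cos_one_2pi_int[THEN iffD1] by blast
    hence "real_of_int k = N * real n" using n by (simp add: field_simps)
    hence kk: "k = N * int n" by (metis of_int_eq_iff of_int_mult of_int_of_nat_eq)
    show False
    proof (cases "N = 0")
      case True thus False using kk k by simp
    next
      case False
      hence N1: "1 \<le> \<bar>N\<bar>" by linarith
      have "\<bar>k\<bar> = \<bar>N\<bar> * int n" using kk by (simp add: abs_mult)
      also have "\<dots> \<ge> 1 * int n" using N1 by (intro mult_right_mono) auto
      finally have "\<bar>k\<bar> \<ge> int n" by simp
      thus False using k by simp
    qed
  qed
  show ?thesis unfolding z_def[symmetric] using zn z1 by (simp add: sum_gp_strict)
qed

lemma orth:
  assumes n: "0 < n" and t: "t < n" "t' < n"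
  shows "(\<Sum>j<n. E n t' j * cnj (E n t j)) = (if t = t' then of_nat n else 0)"
proof (cases "t = t'")
  case True
  have "E n t' j * cnj (E n t j) = 1" for j using True by (simp add: E_def cis_cnj cis_mult)
  thus ?thesis using True by simp
next
  case False
  define k :: int where "k = int t' - int t"
  have "E n t' j * cnj (E n t j) = cis (2 * pi * real_of_int k / real n) ^ j" for j
  proof -
    have "E n t' j * cnj (E n t j) = cis (real j * (2 * pi * real_of_int k / real n))"
      unfolding E_def k_def cis_cnj cis_mult
      by (rule arg_cong[where f=cis]) (use n in \<open>simp add: field_simps of_nat_mult of_int_diff\<close>)
    thus ?thesis by (simp only: Complex.DeMoivre)
  qed
  hence "(\<Sum>j<n. E n t' j * cnj (E n t j)) = (\<Sum>j<n. cis (2 * pi * real_of_int k / real n) ^ j)" by simp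
  also have "\<dots> = 0" by (rule geo_cis) (use n t False in \<open>auto simp: k_def\<close>)
  finally show ?thesis using False by simp
qed

lemma sq_cnj: "complex_of_real ((cmod z)\<^sup>2) = z * cnj z"
  by (simp add: complex_mult_cnj cmod_power2)

lemma parseval:
  assumes n: "0 < n"
  shows "(\<Sum>j<n. (cmod (\<Sum>t<n. c t * cnj (E n t j)))\<^sup>2) = real n * (\<Sum>t<n. (cmod (c t))\<^sup>2)"
proof -
  have "complex_of_real (\<Sum>j<n. (cmod (\<Sum>t<n. c t * cnj (E n t j)))\<^sup>2)
      = (\<Sum>j<n. (\<Sum>t<n. c t * cnj (E n t j)) * cnj (\<Sum>t'<n. c t' * cnj (E n t' j)))"
    by (simp only: of_real_sum sq_cnj)
  also have "\<dots> = (\<Sum>j<n. \<Sum>t<n. \<Sum>t'<n. c t * cnj (c t') * (E n t' j * cnj (E n t j)))"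
    by (simp add: sum_distrib_left sum_distrib_right mult_ac) (rule sum.cong[OF refl], rule sum.swap)
  also have "\<dots> = (\<Sum>t<n. \<Sum>j<n. \<Sum>t'<n. c t * cnj (c t') * (E n t' j * cnj (E n t j)))"
    by (rule sum.swap)
  also have "\<dots> = (\<Sum>t<n. \<Sum>t'<n. \<Sum>j<n. c t * cnj (c t') * (E n t' j * cnj (E n t j)))"
    by (rule sum.cong[OF refl], rule sum.swap)
  also have "\<dots> = (\<Sum>t<n. \<Sum>t'<n. c t * cnj (c t') * (\<Sum>j<n. E n t' j * cnj (E n t j)))"
    by (simp add: sum_distrib_left)
  also have "\<dots> = (\<Sum>t<n. \<Sum>t'<n. c t * cnj (c t') * (if t = t' then of_nat n else 0))"
    using n by (intro sum.cong refl) (simp add: orth)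
  also have "\<dots> = (\<Sum>t<n. c t * cnj (c t) * of_nat n)"
    by (simp add: if_distrib cong: if_cong)
  also have "\<dots> = complex_of_real (real n * (\<Sum>t<n. (cmod (c t))\<^sup>2))"
    by (simp only: of_real_mult of_real_sum sq_cnj sum_distrib_left mult_ac of_real_of_nat_eq)
  finally show ?thesis using of_real_eq_iff by blast
qed

lemma orth2:
  assumes n: "0 < n" and t: "s < n" "s' < n"
  shows "(\<Sum>t<n. E n t s' * cnj (E n t s)) = (if s = s' then of_nat n else 0)"
proof -
  have "E n t s' * cnj (E n t s) = E n s' t * cnj (E n s t)" for t by (simp add: E_def mult.commute)
  hence "(\<Sum>t<n. E n t s' * cnj (E n t s)) = (\<Sum>t<n. E n s' t * cnj (E n s t))" by simp
  thus ?thesis using orth[OF n t] by simp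
qed

lemma inv_dft:
  assumes n: "0 < n" and s: "s < n"
  shows "h s = (1 / of_nat n) * (\<Sum>t<n. (\<Sum>s'<n. h s' * E n t s') * cnj (E n t s))"
proof -
  have "(\<Sum>t<n. (\<Sum>s'<n. h s' * E n t s') * cnj (E n t s))
      = (\<Sum>s'<n. h s' * (\<Sum>t<n. E n t s' * cnj (E n t s)))"
  proof -
    have "(\<Sum>t<n. (\<Sum>s'<n. h s' * E n t s') * cnj (E n t s))
        = (\<Sum>t<n. \<Sum>s'<n. h s' * (E n t s' * cnj (E n t s)))"
      by (simp add: sum_distrib_right sum_distrib_left mult_ac)
    also have "\<dots> = (\<Sum>s'<n. \<Sum>t<n. h s' * (E n t s' * cnj (E n t s)))" by (rule sum.swap)
    finally show ?thesis by (simp add: sum_distrib_left)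
  qed
  also have "\<dots> = (\<Sum>s'<n. h s' * (if s = s' then of_nat n else 0))"
    using n s by (intro sum.cong refl) (simp add: orth2)
  also have "\<dots> = h s * of_nat n" using s by (simp add: if_distrib cong: if_cong)
  finally show ?thesis using n by simp
qed

lemma hankel_bound:
  assumes m: "0 < m" and n: "n = 2 * m - 1"
    and M: "\<And>t. t < n \<Longrightarrow> cmod (\<Sum>s<n. h s * E n t s) \<le> M"
  shows "(\<Sum>j<m. (cmod (\<Sum>k<m. h (j + k) * u k))\<^sup>2) \<le> M\<^sup>2 * (\<Sum>k<m. (cmod (u k))\<^sup>2)"
proof -
  have n0: "0 < n" using m n by simp
  have mn: "m \<le> n" using m n by simp
  define hh where "hh t = (\<Sum>s<n. h s * E n t s)" for t
  define u' where "u' k = (if k < m then u k else 0)" for k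
  define U where "U t = (\<Sum>k<n. u' k * cnj (E n t k))" for t
  have U_alt: "U t = (\<Sum>k<m. u k * cnj (E n t k))" for t
  proof -
    have "U t = (\<Sum>k<m. u' k * cnj (E n t k))" unfolding U_def
      by (rule sum.mono_neutral_right) (use mn in \<open>auto simp: u'_def\<close>)
    thus ?thesis by (simp add: u'_def)
  qed
  have step1: "(\<Sum>k<m. h (j + k) * u k) = (1 / of_nat n) * (\<Sum>t<n. (hh t * U t) * cnj (E n t j))"
    if j: "j < m" for j
  proof -
    have "(\<Sum>k<m. h (j + k) * u k)
        = (\<Sum>k<m. ((1 / of_nat n) * (\<Sum>t<n. hh t * cnj (E n t (j + k)))) * u k)"
      unfolding hh_def using j m n by (intro sum.cong refl) (subst inv_dft[OF n0], auto)
    also have "\<dots> = (1 / of_nat n) * (\<Sum>k<m. \<Sum>t<n. hh t * cnj (E n t j) * (u k * cnj (E n t k)))"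
      by (simp add: E_add sum_distrib_left sum_distrib_right mult_ac)
    also have "\<dots> = (1 / of_nat n) * (\<Sum>t<n. \<Sum>k<m. hh t * cnj (E n t j) * (u k * cnj (E n t k)))"
      by (subst sum.swap) (rule refl)
    also have "\<dots> = (1 / of_nat n) * (\<Sum>t<n. (hh t * U t) * cnj (E n t j))"
      by (simp add: U_alt sum_distrib_left mult_ac)
    finally show ?thesis .
  qed
  have "(\<Sum>j<m. (cmod (\<Sum>k<m. h (j + k) * u k))\<^sup>2)
      = (\<Sum>j<m. (cmod ((1 / of_nat n) * (\<Sum>t<n. (hh t * U t) * cnj (E n t j))))\<^sup>2)"
    using step1 by simp
  also have "\<dots> \<le> (\<Sum>j<n. (cmod ((1 / of_nat n) * (\<Sum>t<n. (hh t * U t) * cnj (E n t j))))\<^sup>2)"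
    by (rule sum_mono2) (use mn in auto)
  also have "\<dots> = (\<Sum>j<n. (1 / real n)\<^sup>2 * (cmod (\<Sum>t<n. (hh t * U t) * cnj (E n t j)))\<^sup>2)"
    by (intro sum.cong refl) (simp only: norm_mult power_mult_distrib norm_divide norm_one norm_of_nat)
  also have "\<dots> = (1 / real n)\<^sup>2 * (\<Sum>j<n. (cmod (\<Sum>t<n. (hh t * U t) * cnj (E n t j)))\<^sup>2)"
    by (rule sum_distrib_left[symmetric])
  also have "\<dots> = (1 / real n)\<^sup>2 * (real n * (\<Sum>t<n. (cmod (hh t * U t))\<^sup>2))"
    by (simp only: parseval[OF n0])
  also have "\<dots> \<le> (1 / real n)\<^sup>2 * (real n * (\<Sum>t<n. M\<^sup>2 * (cmod (U t))\<^sup>2))"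
  proof -
    have "(cmod (hh t * U t))\<^sup>2 \<le> M\<^sup>2 * (cmod (U t))\<^sup>2" if "t < n" for t
    proof -
      have "cmod (hh t) \<le> M" using M[OF that] unfolding hh_def .
      hence "(cmod (hh t))\<^sup>2 \<le> M\<^sup>2" by (intro power_mono) auto
      thus ?thesis by (simp add: norm_mult power_mult_distrib mult_right_mono)
    qed
    thus ?thesis by (intro mult_left_mono sum_mono) auto
  qed
  finally have main: "(\<Sum>j<m. (cmod (\<Sum>k<m. h (j + k) * u k))\<^sup>2)
     \<le> (1 / real n)\<^sup>2 * (real n * (\<Sum>t<n. M\<^sup>2 * (cmod (U t))\<^sup>2))" .
  have e1: "(\<Sum>t<n. (cmod (U t))\<^sup>2) = real n * (\<Sum>k<n. (cmod (u' k))\<^sup>2)"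
  proof -
    have "U t = (\<Sum>k<n. u' k * cnj (E n k t))" for t unfolding U_def by (simp add: E_sym[of n t])
    hence "(\<Sum>t<n. (cmod (U t))\<^sup>2) = (\<Sum>t<n. (cmod (\<Sum>k<n. u' k * cnj (E n k t)))\<^sup>2)" by simp
    also have "\<dots> = real n * (\<Sum>k<n. (cmod (u' k))\<^sup>2)" by (rule parseval[OF n0])
    finally show ?thesis .
  qed
  have e2: "(\<Sum>k<n. (cmod (u' k))\<^sup>2) = (\<Sum>k<m. (cmod (u k))\<^sup>2)"
  proof -
    have "(\<Sum>k<n. (cmod (u' k))\<^sup>2) = (\<Sum>k<m. (cmod (u' k))\<^sup>2)"
      by (rule sum.mono_neutral_right) (use mn in \<open>auto simp: u'_def\<close>)
    thus ?thesis by (simp add: u'_def)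
  qed
  have "(1 / real n)\<^sup>2 * (real n * (\<Sum>t<n. M\<^sup>2 * (cmod (U t))\<^sup>2))
     = (1 / real n)\<^sup>2 * (real n * (M\<^sup>2 * (real n * (\<Sum>k<m. (cmod (u k))\<^sup>2))))"
    by (simp only: sum_distrib_left[symmetric] e1 e2)
  also have "\<dots> = M\<^sup>2 * (\<Sum>k<m. (cmod (u k))\<^sup>2)" using n0 by (simp add: power2_eq_square)
  finally show ?thesis using main by simp
qed



lemma sum_reindex_block:
  fixes f :: "nat \<Rightarrow> 'a::comm_monoid_add"
  shows "(\<Sum>r<d * m. f r) = (\<Sum>i<d. \<Sum>j<m. f (i * m + j))"
proof -
  have "(\<Sum>r<d * m. f r) = (\<Sum>i<d. sum f {i * m..<i * m + m})"
    by (rule sum.nat_group[symmetric])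
  also have "\<dots> = (\<Sum>i<d. \<Sum>j<m. f (i * m + j))"
  proof (rule sum.cong[OF refl])
    fix i
    have "sum f {0 + i * m..<m + i * m} = (\<Sum>j=0..<m. f (j + i * m))" by (rule sum.shift_bounds_nat_ivl)
    thus "sum f {i * m..<i * m + m} = (\<Sum>j<m. f (i * m + j))"
      by (simp add: add.commute atLeast0LessThan)
  qed
  finally show ?thesis .
qed

lemma divmod_block1 [simp]: "j < m \<Longrightarrow> (i * m + j) div m = (i::nat)"
proof -
  assume j: "j < m"
  hence "(j + i * m) div m = i + j div m" by simp
  thus ?thesis using j by (simp add: add.commute)
qed
lemma divmod_block2 [simp]: "j < m \<Longrightarrow> (i * m + j) mod m = (j::nat)"
  by (simp add: add.commute)

lemma hn_pos: "odd n \<Longrightarrow> 0 < hn n" by (simp add: hn_def) 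

lemma n_eq: "odd n \<Longrightarrow> n = 2 * hn n - 1" by (simp add: hn_def) 

definition gcoef where "gcoef d n Z = Ghat_adj d n Z"

definition hco :: "nat \<Rightarrow> nat \<Rightarrow> real \<Rightarrow> (nat \<times> nat \<Rightarrow> bool) \<Rightarrow> (nat \<Rightarrow> nat \<Rightarrow> complex) \<Rightarrow> nat \<Rightarrow> nat \<Rightarrow> complex" where
  "hco d n p S Z i s = (\<Sum>l<d. dft d i l * (complex_of_real (if S (l, s) then 1/p - 1 else -1) * Ghat_adj d n Z l s))
       * complex_of_real (1 / sqrt (real (wt n s)))"

lemma hankel_eval: "j + k < n \<Longrightarrow> hankel n x j k = x (j + k) * complex_of_real (1 / sqrt (real (wt n (j + k))))"
  unfolding hankel_def Gmat_def by (simp add: if_distrib cong: if_cong)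

lemma Ghat_block:
  assumes "j < hn n" "k < hn n" "odd n"
  shows "Ghat d n X (i * hn n + j) (i' * hn n + k)
     = (if i = i' then (\<Sum>l<d. dft d i l * X l (j + k)) * complex_of_real (1 / sqrt (real (wt n (j + k)))) else 0)"
proof -
  have "j + k < n" using assms n_eq[OF assms(3)] by linarith
  thus ?thesis unfolding Ghat_def using assms by (simp add: hankel_eval)
qed

lemma dev_block:
  assumes "j < hn n" "k < hn n" "odd n"
  shows "deviation d n p S Z (i * hn n + j) (i' * hn n + k) = (if i = i' then hco d n p S Z i (j + k) else 0)"
proof (cases "i = i'")
  case True
  have "complex_of_real (1 / p) * (\<Sum>l<d. dft d i l * P_Omega S (Ghat_adj d n Z) l (j + k))
        - (\<Sum>l<d. dft d i l * Ghat_adj d n Z l (j + k))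
      = (\<Sum>l<d. dft d i l * (complex_of_real (if S (l, j + k) then 1/p - 1 else -1) * Ghat_adj d n Z l (j + k)))"
    unfolding sum_distrib_left sum_subtractf[symmetric]
    by (intro sum.cong refl) (auto simp: P_Omega_def algebra_simps of_real_diff divide_inverse)
  note key = this
  have alg: "\<And>(a::complex) b c w. a * (b * w) - c * w = (a * b - c) * w" by (simp add: algebra_simps)
  show ?thesis unfolding deviation_def Ghat_block[OF assms] hco_def if_P[OF True]
    unfolding alg key by (rule refl)
qed (simp add: deviation_def Ghat_block[OF assms])

lemma spec_bound:
  assumes n: "odd n" and M0: "0 \<le> M"
    and M: "\<And>i t. i < d \<Longrightarrow> t < n \<Longrightarrow> cmod (\<Sum>s<n. hco d n p S Z i s * E n t s) \<le> M"
  shows "spec_norm (d * hn n) (d * hn n) (deviation d n p S Z) \<le> M"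
proof -
  define m where "m = hn n"
  have m0: "0 < m" and nm: "n = 2 * m - 1" using hn_pos[OF n] n_eq[OF n] by (auto simp: m_def)
  let ?A = "deviation d n p S Z"
  have row: "(\<Sum>c<d * m. ?A (i * m + j) c * v c) = (\<Sum>k<m. hco d n p S Z i (j + k) * v (i * m + k))"
    if i: "i < d" and j: "j < m" for i j v
  proof -
    have "(\<Sum>c<d * m. ?A (i * m + j) c * v c) = (\<Sum>i'<d. \<Sum>k<m. ?A (i * m + j) (i' * m + k) * v (i' * m + k))"
      by (rule sum_reindex_block)
    also have "\<dots> = (\<Sum>i'<d. if i = i' then (\<Sum>k<m. hco d n p S Z i (j + k) * v (i * m + k)) else 0)"
      using j n unfolding m_def by (intro sum.cong refl) (auto simp: dev_block)
    also have "\<dots> = (\<Sum>k<m. hco d n p S Z i (j + k) * v (i * m + k))" using i by simp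
    finally show ?thesis .
  qed
  show ?thesis unfolding spec_norm_def m_def[symmetric]
  proof (rule cSup_least)
    show "{vec_norm (d * m) (\<lambda>r. \<Sum>c<d * m. ?A r c * v c) |v. vec_norm (d * m) v \<le> 1} \<noteq> {}"
    proof -
      have "vec_norm (d * m) (\<lambda>_. 0) \<le> 1" by (simp add: vec_norm_def)
      thus ?thesis by blast
    qed
  next
    fix x assume "x \<in> {vec_norm (d * m) (\<lambda>r. \<Sum>c<d * m. ?A r c * v c) |v. vec_norm (d * m) v \<le> 1}"
    then obtain v where x: "x = vec_norm (d * m) (\<lambda>r. \<Sum>c<d * m. ?A r c * v c)" and v: "vec_norm (d * m) v \<le> 1"
      by blast
    have "x\<^sup>2 = (\<Sum>r<d * m. (cmod (\<Sum>c<d * m. ?A r c * v c))\<^sup>2)"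
      unfolding x vec_norm_def by (simp add: sum_nonneg)
    also have "\<dots> = (\<Sum>i<d. \<Sum>j<m. (cmod (\<Sum>c<d * m. ?A (i * m + j) c * v c))\<^sup>2)"
      by (rule sum_reindex_block)
    also have "\<dots> = (\<Sum>i<d. \<Sum>j<m. (cmod (\<Sum>k<m. hco d n p S Z i (j + k) * v (i * m + k)))\<^sup>2)"
      by (intro sum.cong refl) (simp add: row)
    also have "\<dots> \<le> (\<Sum>i<d. M\<^sup>2 * (\<Sum>k<m. (cmod (v (i * m + k)))\<^sup>2))"
      by (intro sum_mono hankel_bound[OF m0 nm]) (use M in auto)
    also have "\<dots> = M\<^sup>2 * (\<Sum>c<d * m. (cmod (v c))\<^sup>2)"
      by (simp add: sum_distrib_left sum_reindex_block)
    also have "\<dots> = M\<^sup>2 * (vec_norm (d * m) v)\<^sup>2"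
      unfolding vec_norm_def by (simp add: sum_nonneg)
    also have "\<dots> \<le> M\<^sup>2 * 1"
    proof -
      have "(vec_norm (d * m) v)\<^sup>2 \<le> 1\<^sup>2" using v by (intro power_mono) (auto simp: vec_norm_def sum_nonneg)
      thus ?thesis by (intro mult_left_mono) auto
    qed
    finally have "x\<^sup>2 \<le> M\<^sup>2" by simp
    moreover have "0 \<le> x" unfolding x vec_norm_def by (simp add: sum_nonneg)
    ultimately show "x \<le> M" using M0 by (simp add: power2_le_iff_abs_le)
  qed
qed



definition bco :: "nat \<Rightarrow> nat \<Rightarrow> (nat \<Rightarrow> nat \<Rightarrow> complex) \<Rightarrow> nat \<Rightarrow> nat \<Rightarrow> nat \<times> nat \<Rightarrow> complex" where
  "bco d n Z i t x = (case x of (l, s) \<Rightarrow>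
     Ghat_adj d n Z l s * dft d i l * complex_of_real (1 / sqrt (real (wt n s))) * E n t s)"

lemma fourier_sum:
  "(\<Sum>s<n. hco d n p S Z i s * E n t s)
   = (\<Sum>x\<in>{..<d} \<times> {..<n}. complex_of_real (if S x then 1/p - 1 else -1) * bco d n Z i t x)"
proof -
  have "(\<Sum>s<n. hco d n p S Z i s * E n t s)
      = (\<Sum>s<n. \<Sum>l<d. complex_of_real (if S (l, s) then 1/p - 1 else -1) * bco d n Z i t (l, s))"
    unfolding hco_def bco_def by (intro sum.cong refl) (simp add: sum_distrib_right sum_distrib_left mult_ac)
  also have "\<dots> = (\<Sum>l<d. \<Sum>s<n. complex_of_real (if S (l, s) then 1/p - 1 else -1) * bco d n Z i t (l, s))"
    by (rule sum.swap)
  also have "\<dots> = (\<Sum>x\<in>{..<d} \<times> {..<n}. complex_of_real (if S x then 1/p - 1 else -1) * bco d n Z i t x)"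
    by (subst sum.cartesian_product) (simp add: case_prod_unfold)
  finally show ?thesis .
qed

lemma Ghat_basis_block:
  assumes "j < hn n" "k < hn n" "odd n" "l < d" "s < n"
  shows "Ghat_basis d n l s (i * hn n + j) (i' * hn n + k) = (if i = i' then dft d i l * Gmat n s j k else 0)"
  unfolding Ghat_basis_def Ghat_block[OF assms(1-3)] Gmat_def using assms
  by (auto simp: if_distrib cong: if_cong)

lemma adj_inner:
  assumes n: "odd n" and l: "l < d" and s: "s < n"
  shows "Ghat_adj d n Z l s = mat_inner (d * hn n) (d * hn n) Z (Ghat_basis d n l s)"
proof -
  define m where "m = hn n"
  have cG: "cnj (Gmat n s j k) = Gmat n s j k" for j k by (simp add: Gmat_def)
  have "mat_inner (d * m) (d * m) Z (Ghat_basis d n l s)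
      = (\<Sum>i<d. \<Sum>j<m. \<Sum>c<d * m. Z (i * m + j) c * cnj (Ghat_basis d n l s (i * m + j) c))"
    unfolding mat_inner_def by (rule sum_reindex_block)
  also have "\<dots> = (\<Sum>i<d. \<Sum>j<m. \<Sum>i'<d. \<Sum>k<m. Z (i * m + j) (i' * m + k) * cnj (Ghat_basis d n l s (i * m + j) (i' * m + k)))"
    by (intro sum.cong refl sum_reindex_block)
  also have "\<dots> = (\<Sum>i<d. \<Sum>j<m. \<Sum>i'<d. if i = i' then (\<Sum>k<m. Z (i * m + j) (i * m + k) * (cnj (dft d i l) * Gmat n s j k)) else 0)"
    using n l s unfolding m_def by (intro sum.cong refl) (auto simp: Ghat_basis_block cG)
  also have "\<dots> = (\<Sum>i<d. \<Sum>j<m. \<Sum>k<m. Z (i * m + j) (i * m + k) * (cnj (dft d i l) * Gmat n s j k))"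
    by (rule sum.cong[OF refl], rule sum.cong[OF refl]) simp
  also have "\<dots> = Ghat_adj d n Z l s"
    unfolding Ghat_adj_def m_def by (simp add: sum_distrib_left mult_ac)
  finally show ?thesis unfolding m_def by simp
qed

lemma cmod_dft: "0 < d \<Longrightarrow> cmod (dft d i l) = 1 / sqrt (real d)"
  by (simp add: dft_def norm_divide)

lemma cmod_bco:
  assumes n: "odd n" and l: "l < d" and s: "s < n"
  shows "cmod (bco d n Z i t (l, s)) = coef d n Z l s"
proof -
  have d: "0 < d" using l by simp
  have "cmod (bco d n Z i t (l, s)) = cmod (Ghat_adj d n Z l s) * (1 / sqrt (real d)) * (1 / sqrt (real (wt n s)))"
    unfolding bco_def using d by (simp add: norm_mult norm_divide cmod_dft)
  also have "\<dots> = coef d n Z l s"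
    unfolding coef_def adj_inner[OF n l s] by (simp add: real_sqrt_mult)
  finally show ?thesis .
qed



lemma coef_le_Ginf:
  assumes "l < d" "s < n"
  shows "coef d n Z l s \<le> normGinf d n Z"
proof -
  have fin: "finite {coef d n Z l s | l s. l < d \<and> s < n}"
    by (rule finite_subset[of _ "(\<lambda>(l,s). coef d n Z l s) ` ({..<d}\<times>{..<n})"]) auto
  show ?thesis unfolding normGinf_def by (rule Max_ge[OF fin]) (use assms in blast)
qed

lemma coef_nonneg: "0 \<le> coef d n Z l s"
  unfolding coef_def by simp

lemma sumsq_GF: "(\<Sum>x\<in>{..<d} \<times> {..<n}. (case x of (l, s) \<Rightarrow> coef d n Z l s)\<^sup>2) = (normGF d n Z)\<^sup>2"
proof -
  have "(\<Sum>x\<in>{..<d} \<times> {..<n}. (case x of (l, s) \<Rightarrow> coef d n Z l s)\<^sup>2) = (\<Sum>l<d. \<Sum>s<n. (coef d n Z l s)\<^sup>2)"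
    unfolding sum.cartesian_product by (intro sum.cong refl) auto
  thus ?thesis unfolding normGF_def by (simp add: sum_nonneg)
qed

definition beta :: "nat \<Rightarrow> nat \<Rightarrow> (nat \<Rightarrow> nat \<Rightarrow> complex) \<Rightarrow> nat \<Rightarrow> nat \<Rightarrow> nat \<Rightarrow> nat \<times> nat \<Rightarrow> real" where
  "beta d n Z i t q x = (if q = 0 then Re (bco d n Z i t x) else if q = 1 then - Re (bco d n Z i t x)
      else if q = 2 then Im (bco d n Z i t x) else - Im (bco d n Z i t x))"

lemma beta_abs: "\<bar>beta d n Z i t q x\<bar> \<le> cmod (bco d n Z i t x)"
  unfolding beta_def by (auto simp: abs_Re_le_cmod abs_Im_le_cmod)

lemma beta_sq: "(beta d n Z i t q x)\<^sup>2 \<le> (cmod (bco d n Z i t x))\<^sup>2"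
proof -
  have "\<bar>beta d n Z i t q x\<bar>\<^sup>2 \<le> (cmod (bco d n Z i t x))\<^sup>2" by (intro power_mono beta_abs) auto
  thus ?thesis by simp
qed

lemma main_bound:
  fixes d n :: nat and p :: real
  assumes d: "1 \<le> d" and n: "odd n" and p: "0 < p" "p \<le> 1"
  shows "measure_pmf.prob (bernoulli_model d n p)
       {S. spec_norm (d * hn n) (d * hn n) (deviation d n p S Z)
           \<le> 8 * (sqrt (ln (real (d * n)) / p) * normGF d n Z
                  + ln (real (d * n)) / p * normGinf d n Z)}
     \<ge> 1 - 4 * real (d * n) powr (- 1)"
proof -
  define N where "N = real (d * n)"
  have n1: "1 \<le> n" using n by (cases n) auto
  have "1 * 1 \<le> d * n" using d n1 by (rule mult_le_mono)
  hence "real 1 \<le> real (d * n)" by (simp only: of_nat_le_iff mult_1)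
  hence N1: "1 \<le> N" unfolding N_def by simp
  define I where "I = {..<d} \<times> {..<n}"
  have finI: "finite I" unfolding I_def by simp
  define \<mu> where "\<mu> = bernoulli_model d n p"
  define G where "G = {S. spec_norm (d * hn n) (d * hn n) (deviation d n p S Z)
           \<le> 8 * (sqrt (ln N / p) * normGF d n Z + ln N / p * normGinf d n Z)}"
  show ?thesis
  proof (cases "N = 1")
    case True
    have "1 - 4 * N powr (- 1) \<le> 0" using True by simp
    also have "0 \<le> measure_pmf.prob \<mu> G" by simp
    finally show ?thesis unfolding \<mu>_def G_def N_def by simp
  next
    case False
    hence N2: "1 < N" using N1 by simp
    define L where "L = 2 * ln N"
    have L0: "0 < L" unfolding L_def using N2 by simp
    define GF where "GF = normGF d n Z"
    define Gi where "Gi = normGinf d n Z"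
    have GF0: "0 \<le> GF" unfolding GF_def normGF_def by (simp add: sum_nonneg)
    have Gi0: "0 \<le> Gi" unfolding Gi_def using coef_le_Ginf[of 0 d 0 n Z] d n1 coef_nonneg[of d n Z 0 0] by simp
    define \<tau> where "\<tau> = 4 * (sqrt (ln N / p) * GF + ln N / p * Gi)"
    have lnN: "0 < ln N" using N2 by simp
    have tau0: "0 \<le> \<tau>" unfolding \<tau>_def using lnN p GF0 Gi0 by simp
    define c where "c = (\<lambda>v::bool. if v then 1/p - 1 else (-1::real))"
    define bad where "bad = (\<lambda>(i, t, q). {S. \<tau> < (\<Sum>x\<in>I. (if S x then 1/p - 1 else -1) * beta d n Z i t q x)})"
    have bad_prob: "measure_pmf.prob \<mu> (bad (i, t, q)) \<le> exp (- L)" if "i < d" "t < n" for i t q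
    proof -
      have bB: "\<bar>beta d n Z i t q x\<bar> \<le> Gi" if "x \<in> I" for x
      proof -
        obtain l s where x: "x = (l, s)" "l < d" "s < n" using \<open>x \<in> I\<close> unfolding I_def by auto
        have "\<bar>beta d n Z i t q x\<bar> \<le> cmod (bco d n Z i t x)" by (rule beta_abs)
        also have "\<dots> = coef d n Z l s" using x cmod_bco[OF n x(2,3)] by simp
        also have "\<dots> \<le> Gi" unfolding Gi_def using coef_le_Ginf x by blast
        finally show ?thesis .
      qed
      have V: "(\<Sum>x\<in>I. (beta d n Z i t q x)\<^sup>2) \<le> GF\<^sup>2"
      proof -
        have "(\<Sum>x\<in>I. (beta d n Z i t q x)\<^sup>2) \<le> (\<Sum>x\<in>I. (case x of (l, s) \<Rightarrow> coef d n Z l s)\<^sup>2)"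
        proof (rule sum_mono)
          fix x assume "x \<in> I"
          then obtain l s where x: "x = (l, s)" "l < d" "s < n" unfolding I_def by auto
          show "(beta d n Z i t q x)\<^sup>2 \<le> (case x of (l, s) \<Rightarrow> coef d n Z l s)\<^sup>2"
            using beta_sq[of d n Z i t q x] cmod_bco[OF n x(2,3)] x by simp
        qed
        thus ?thesis unfolding I_def GF_def sumsq_GF .
      qed
      have t1: "2 * sqrt (L * (\<Sum>x\<in>I. (beta d n Z i t q x)\<^sup>2) / p) \<le> \<tau>"
      proof -
        have "2 * sqrt (L * (\<Sum>x\<in>I. (beta d n Z i t q x)\<^sup>2) / p) \<le> 2 * sqrt (L * GF\<^sup>2 / p)"
          using V L0 p by (intro mult_left_mono real_sqrt_le_mono divide_right_mono mult_left_mono) auto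
        also have "\<dots> = 2 * sqrt 2 * (sqrt (ln N / p) * GF)"
          unfolding L_def using GF0 by (simp add: real_sqrt_mult real_sqrt_divide)
        also have "\<dots> \<le> 4 * (sqrt (ln N / p) * GF)"
        proof -
          have "sqrt 2 \<le> 2" by (simp add: real_sqrt_le_iff')
          thus ?thesis using GF0 lnN p by (intro mult_right_mono) (auto)
        qed
        also have "\<dots> \<le> \<tau>" unfolding \<tau>_def using lnN p Gi0 by simp
        finally show ?thesis .
      qed
      have t2: "2 * L * Gi / p \<le> \<tau>"
      proof -
        have "0 \<le> sqrt (ln N / p) * GF" using lnN p GF0 by simp
        thus ?thesis unfolding \<tau>_def L_def by simp
      qed
      show ?thesis unfolding bad_def \<mu>_def bernoulli_model_def I_def[symmetric]
        by simp (rule tail_bern[OF finI p bB Gi0 L0 t1 t2])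
    qed
    define K where "K = {..<d} \<times> {..<n} \<times> {..<(4::nat)}"
    have sub: "UNIV - G \<subseteq> (\<Union>k\<in>K. bad k)"
    proof
      fix S assume S: "S \<in> UNIV - G"
      show "S \<in> (\<Union>k\<in>K. bad k)"
      proof (rule ccontr)
        assume nb: "S \<notin> (\<Union>k\<in>K. bad k)"
        have q: "(\<Sum>x\<in>I. (if S x then 1/p - 1 else -1) * beta d n Z i t q x) \<le> \<tau>"
          if "i < d" "t < n" "q < 4" for i t q
          using nb that unfolding K_def bad_def by force
        have F: "cmod (\<Sum>s<n. hco d n p S Z i s * E n t s) \<le> 2 * \<tau>" if it: "i < d" "t < n" for i t
        proof -
          define F where "F = (\<Sum>s<n. hco d n p S Z i s * E n t s)"
          have F_eq: "F = (\<Sum>x\<in>I. complex_of_real (if S x then 1/p - 1 else -1) * bco d n Z i t x)"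
            unfolding F_def I_def by (rule fourier_sum)
          have ReF: "Re F = (\<Sum>x\<in>I. (if S x then 1/p - 1 else -1) * beta d n Z i t 0 x)"
            unfolding F_eq beta_def by simp
          have ImF: "Im F = (\<Sum>x\<in>I. (if S x then 1/p - 1 else -1) * beta d n Z i t 2 x)"
            unfolding F_eq beta_def by simp
          have ReF': "- Re F = (\<Sum>x\<in>I. (if S x then 1/p - 1 else -1) * beta d n Z i t 1 x)"
            unfolding F_eq beta_def by (simp add: sum_negf[symmetric])
          have ImF': "- Im F = (\<Sum>x\<in>I. (if S x then 1/p - 1 else -1) * beta d n Z i t 3 x)"
            unfolding F_eq beta_def by (simp add: sum_negf[symmetric])
          have "\<bar>Re F\<bar> \<le> \<tau>" using q[OF it, of 0] q[OF it, of 1] ReF ReF' by linarith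
          moreover have "\<bar>Im F\<bar> \<le> \<tau>" using q[OF it, of 2] q[OF it, of 3] ImF ImF' by linarith
          ultimately show ?thesis using cmod_le[of F] unfolding F_def by linarith
        qed
        have "spec_norm (d * hn n) (d * hn n) (deviation d n p S Z) \<le> 2 * \<tau>"
          by (rule spec_bound[OF n _ F]) (use tau0 in auto)
        hence "S \<in> G" unfolding G_def \<tau>_def GF_def Gi_def by simp
        thus False using S by simp
      qed
    qed
    have "measure_pmf.prob \<mu> (UNIV - G) \<le> measure_pmf.prob \<mu> (\<Union>k\<in>K. bad k)"
      by (rule measure_pmf.finite_measure_mono[OF sub]) simp
    also have "\<dots> \<le> (\<Sum>k\<in>K. measure_pmf.prob \<mu> (bad k))"
      by (rule measure_pmf.finite_measure_subadditive_finite) (auto simp: K_def)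
    also have "\<dots> \<le> (\<Sum>k\<in>K. exp (- L))"
      by (rule sum_mono) (auto simp: K_def intro!: bad_prob)
    also have "\<dots> = 4 * N * exp (- L)" unfolding K_def N_def by (simp add: card_cartesian_product)
    also have "\<dots> = 4 * N powr (- 1)"
    proof -
      have "L = ln N + ln N" unfolding L_def by simp
      hence "exp L = exp (ln N) * exp (ln N)" by (simp only: exp_add)
      hence "exp L = N * N" using N2 by simp
      hence "exp (- L) = 1 / (N * N)" by (simp add: exp_minus divide_inverse)
      moreover have "N powr (- 1) = 1 / N" using N2 by (simp add: powr_minus divide_inverse)
      ultimately have e: "N * exp (- L) = N powr (- 1)" using N2 by (simp add: divide_simps mult_ac)
      show ?thesis by (simp only: e[symmetric] mult.assoc)
    qed
    finally have bd: "measure_pmf.prob \<mu> (UNIV - G) \<le> 4 * N powr (- 1)" .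
    have "measure_pmf.prob \<mu> (UNIV - G) = 1 - measure_pmf.prob \<mu> G"
      using measure_pmf.prob_compl[of G \<mu>] by simp
    hence "1 - 4 * N powr (- 1) \<le> measure_pmf.prob \<mu> G" using bd by simp
    thus ?thesis unfolding \<mu>_def G_def N_def by simp
  qed
qed


theorem lemma4p3:
  shows "\<exists>C > 0. \<exists>c1 > 0. \<exists>c2 > 0. \<forall>d n p Z.
     d \<ge> 1 \<longrightarrow> odd n \<longrightarrow> 0 < p \<longrightarrow> p \<le> 1 \<longrightarrow> block_diag d n Z \<longrightarrow>
     measure_pmf.prob (bernoulli_model d n p)
       {S. spec_norm (d * hn n) (d * hn n) (deviation d n p S Z)
           \<le> C * (sqrt (ln (real (d * n)) / p) * normGF d n Z
                  + ln (real (d * n)) / p * normGinf d n Z)}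
     \<ge> 1 - c1 * real (d * n) powr (- c2)"
proof -
  have "\<forall>d n p Z.
     d \<ge> 1 \<longrightarrow> odd n \<longrightarrow> 0 < p \<longrightarrow> p \<le> 1 \<longrightarrow> block_diag d n Z \<longrightarrow>
     measure_pmf.prob (bernoulli_model d n p)
       {S. spec_norm (d * hn n) (d * hn n) (deviation d n p S Z)
           \<le> 8 * (sqrt (ln (real (d * n)) / p) * normGF d n Z
                  + ln (real (d * n)) / p * normGinf d n Z)}
     \<ge> 1 - 4 * real (d * n) powr (- 1)"
    using main_bound by blast
  moreover have "(8::real) > 0" "(4::real) > 0" "(1::real) > 0" by simp_all
  ultimately show ?thesis by blast
qed
end
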